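(* Let $n\geq 2$ and suppose the final $2n$ modes of a state $|\phi\rangle$ are given as input to the $n$-GHZ state analyzer (with these modes labeled $0,\dots,2n-1$), and that the analyzer heralds success. Write the part of the input on the analyzer modes in terms of Fock patterns $\vec m=(m_0,\dots,m_{2n-1})$ (internal states suppressed). Then, given success, only terms of the form $\sum_{\vec m\in\mathcal S}c_{\vec m}|\phi_{\vec m}\rangle|\vec m\rangle$ may affect the output state, where $\mathcal S=\{\vec m: c_{\vec m}\neq0,\ m_{2i+1}+m_{2i+2}=1\text{ for all }0\le i<n\}$ (with the convention $m_{2n}=m_0$). Moreover, if for all $\vec m\in\mathcal S$ and all $0\le i<n$ we have $(m_{2i},m_{2i+1})\notin\{(1,1),(0,0)\}$, then only the two terms $\vec m=(1,0)^n=(1,0,1,0,\dots,1,0)$ and $\vec m=(0,1)^n=(0,1,\dots,0,1)$ may affect the measurement (and only if both have nonzero coefficient).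
   Context: Photonic model: photons occupy spatial modes and carry internal states; linear optics acts on spatial modes; photon-number-resolving (PNR) detection reveals only the total photon number in each spatial mode. Hadamard beamsplitter on ordered pair $(p,q)$: $a_p^\dagger\mapsto(a_p^\dagger+a_q^\dagger)/\sqrt2$, $a_q^\dagger\mapsto(a_p^\dagger-a_q^\dagger)/\sqrt2$ (the second mode receives the phase). The $n$-GHZ state analyzer on modes $0,\dots,2n-1$: apply the Hadamard beamsplitter to each ordered pair in $\{(1,2),(3,4),\dots,(2n-3,2n-2),(2n-1,0)\}$, PNR-measure all $2n$ modes obtaining pattern $(m_0,\dots,m_{2n-1})$, and herald success iff $m_{2i+1}+m_{2i+2}=1$ for all $0\le i<n$ (with $m_{2n}=m_0$). *)

theory Defs
  imports Complex_Main
begin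

text \<open>Fock basis states on the analyzer modes: a configuration f assigns to each
spatial mode j and internal state k the photon number f j k.
A (joint) state is a finitely supported amplitude function on pairs (a, f), where
a indexes a basis of the remaining (non-analyzer) part of the system.\<close>

type_synonym 'i fock = "nat \<Rightarrow> 'i \<Rightarrow> nat"
type_synonym ('a, 'i) state = "'a \<times> 'i fock \<Rightarrow> complex"

text \<open>Two-mode Hadamard beamsplitter amplitude
  <c,d| U |a,b>, where a_p^dag -> (a_p^dag + a_q^dag)/sqrt 2,
  a_q^dag -> (a_p^dag - a_q^dag)/sqrt 2 (single internal state).
  Obtained from expanding (x+y)^a (x-y)^b / sqrt(2^(a+b) a! b!) and x^c y^d |0> = sqrt(c! d!) |c,d>.\<close>
definition bs_amp :: "nat \<Rightarrow> nat \<Rightarrow> nat \<Rightarrow> nat \<Rightarrow> complex" where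
  "bs_amp a b c d =
     (if c + d = a + b then
        complex_of_real (sqrt (fact c * fact d / (fact a * fact b * 2 ^ (a + b))))
        * (\<Sum>j = 0..c. of_nat (a choose j) * of_nat (b choose (c - j)) * (-1) ^ (b + c + j))
      else 0)"

definition bs_mat :: "nat \<Rightarrow> nat \<Rightarrow> ('i::finite) fock \<Rightarrow> 'i fock \<Rightarrow> complex" where
  "bs_mat p q f g =
     (if \<forall>j k. j \<noteq> p \<and> j \<noteq> q \<longrightarrow> g j k = f j k
      then (\<Prod>k\<in>UNIV. bs_amp (f p k) (f q k) (g p k) (g q k))
      else 0)"

definition apply_bs :: "nat \<Rightarrow> nat \<Rightarrow> ('a, 'i::finite) state \<Rightarrow> ('a, 'i) state" where
  "apply_bs p q \<psi> = (\<lambda>(a, g). \<Sum>f\<in>{f. \<psi> (a, f) \<noteq> 0}. bs_mat p q f g * \<psi> (a, f))"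

definition ghz_pairs :: "nat \<Rightarrow> (nat \<times> nat) list" where
  "ghz_pairs n = map (\<lambda>i. (2 * i + 1, (2 * i + 2) mod (2 * n))) [0..<n]"

definition ghz_optics :: "nat \<Rightarrow> ('a, 'i::finite) state \<Rightarrow> ('a, 'i) state" where
  "ghz_optics n \<psi> = fold (\<lambda>(p, q) \<phi>. apply_bs p q \<phi>) (ghz_pairs n) \<psi>"

text \<open>PNR detection sees only the total photon number per spatial mode.\<close>
definition pattern :: "('i::finite) fock \<Rightarrow> nat \<Rightarrow> nat" where
  "pattern f j = (\<Sum>k\<in>UNIV. f j k)"

definition herald :: "nat \<Rightarrow> (nat \<Rightarrow> nat) \<Rightarrow> bool" where
  "herald n m = (\<forall>i<n. m (2 * i + 1) + m ((2 * i + 2) mod (2 * n)) = 1)"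

text \<open>Unnormalized post-measurement state after observing PNR pattern m on modes 0..2n-1.\<close>
definition proj_outcome :: "nat \<Rightarrow> (nat \<Rightarrow> nat) \<Rightarrow> ('a, 'i::finite) state \<Rightarrow> ('a, 'i) state" where
  "proj_outcome n m \<phi> = (\<lambda>(a, g). if \<forall>j<2 * n. pattern g j = m j then \<phi> (a, g) else 0)"

definition restrict_terms :: "((nat \<Rightarrow> nat) \<Rightarrow> bool) \<Rightarrow> ('a, 'i::finite) state \<Rightarrow> ('a, 'i) state" where
  "restrict_terms P \<psi> = (\<lambda>(a, f). if P (pattern f) then \<psi> (a, f) else 0)"

definition S_set :: "nat \<Rightarrow> ('a, 'i::finite) state \<Rightarrow> (nat \<Rightarrow> nat) set" where
  "S_set n \<psi> = {m. (\<exists>a f. \<psi> (a, f) \<noteq> 0 \<and> pattern f = m) \<and> herald n m}"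

definition alt10 :: "nat \<Rightarrow> nat \<Rightarrow> nat" where
  "alt10 n j = (if j < 2 * n \<and> even j then 1 else 0)"

definition alt01 :: "nat \<Rightarrow> nat \<Rightarrow> nat" where
  "alt01 n j = (if j < 2 * n \<and> odd j then 1 else 0)"

end

theory Submission
  imports Defs "HOL-Library.FuncSet"
begin

lemma fin_funs_bounded:
  fixes N :: "'i::finite \<Rightarrow> nat"
  shows "finite {h :: 'i \<Rightarrow> nat \<times> nat. \<forall>k. h k \<in> {0..N k} \<times> {0..N k}}"
proof -
  have "{h :: 'i \<Rightarrow> nat \<times> nat. \<forall>k. h k \<in> {0..N k} \<times> {0..N k}} = Pi\<^sub>E UNIV (\<lambda>k. {0..N k} \<times> {0..N k})"
    by (auto simp: PiE_UNIV_domain Pi_def)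
  moreover have "finite (Pi\<^sub>E (UNIV::'i set) (\<lambda>k. {0..N k} \<times> {0..N k}))"
    by (rule finite_PiE) auto
  ultimately show ?thesis by simp
qed

lemma bs_mat_nz:
  assumes "bs_mat p q f g \<noteq> 0"
  shows "\<forall>j k. j \<noteq> p \<and> j \<noteq> q \<longrightarrow> g j k = f j k"
    and "\<forall>k. g p k + g q k = f p k + f q k"
proof -
  show "\<forall>j k. j \<noteq> p \<and> j \<noteq> q \<longrightarrow> g j k = f j k"
    using assms unfolding bs_mat_def by (auto split: if_splits)
  show "\<forall>k. g p k + g q k = f p k + f q k"
  proof
    fix k
    have "(\<Prod>k\<in>UNIV. bs_amp (f p k) (f q k) (g p k) (g q k)) \<noteq> 0"
      using assms unfolding bs_mat_def by (auto split: if_splits)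
    then have "bs_amp (f p k) (f q k) (g p k) (g q k) \<noteq> 0" by auto
    then show "g p k + g q k = f p k + f q k" unfolding bs_amp_def by (auto split: if_splits)
  qed
qed

lemma fin_bs_mat: "finite {g. bs_mat p q f (g::('i::finite) fock) \<noteq> 0}"
proof -
  define N where "N = (\<lambda>k. f p k + f q k)"
  define A where "A = {g::'i fock. (\<forall>j k. j \<noteq> p \<and> j \<noteq> q \<longrightarrow> g j k = f j k) \<and> (\<forall>k. g p k \<le> N k \<and> g q k \<le> N k)}"
  have sub: "{g. bs_mat p q f g \<noteq> 0} \<subseteq> A"
  proof
    fix g assume "g \<in> {g. bs_mat p q f g \<noteq> 0}"
    then have "bs_mat p q f g \<noteq> 0" by simp
    note h = bs_mat_nz[OF this]
    have "\<forall>k. g p k \<le> N k \<and> g q k \<le> N k"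
    proof
      fix k show "g p k \<le> N k \<and> g q k \<le> N k" using h(2)[rule_format, of k] unfolding N_def by linarith
    qed
    then show "g \<in> A" unfolding A_def using h(1) by blast
  qed
  have inj: "inj_on (\<lambda>g k. (g p k, g q k)) A"
  proof (rule inj_onI)
    fix g1 g2 assume a: "g1 \<in> A" "g2 \<in> A" "(\<lambda>k. (g1 p k, g1 q k)) = (\<lambda>k. (g2 p k, g2 q k))"
    show "g1 = g2"
    proof (intro ext)
      fix j k
      show "g1 j k = g2 j k"
      proof (cases "j = p \<or> j = q")
        case True then show ?thesis using a(3) by (metis prod.inject)
      next
        case False then show ?thesis using a(1,2) unfolding A_def by auto
      qed
    qed
  qed
  have "(\<lambda>g k. (g p k, g q k)) ` A \<subseteq> {h. \<forall>k. h k \<in> {0..N k} \<times> {0..N k}}"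
    unfolding A_def by auto
  then have "finite ((\<lambda>g k. (g p k, g q k)) ` A)"
    using fin_funs_bounded finite_subset by blast
  then have "finite A" using inj finite_imageD by blast
  then show ?thesis using sub finite_subset by blast
qed

lemma apply_bs_eq:
  "apply_bs p q \<phi> (a, g) = (\<Sum>f\<in>{f. \<phi> (a, f) \<noteq> 0}. bs_mat p q f g * \<phi> (a, f))"
  unfolding apply_bs_def prod.case by (rule refl)

lemma fin_apply_bs:
  assumes "finite {f. \<phi> (a, f) \<noteq> 0}"
  shows "finite {g. apply_bs p q (\<phi> :: ('a, 'i::finite) state) (a, g) \<noteq> 0}"
proof -
  have "{g. apply_bs p q \<phi> (a, g) \<noteq> 0} \<subseteq> (\<Union>f\<in>{f. \<phi> (a, f) \<noteq> 0}. {g. bs_mat p q f g \<noteq> 0})"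
  proof
    fix g assume "g \<in> {g. apply_bs p q \<phi> (a, g) \<noteq> 0}"
    then have "apply_bs p q \<phi> (a, g) \<noteq> 0" by blast
    then have "(\<Sum>f\<in>{f. \<phi> (a, f) \<noteq> 0}. bs_mat p q f g * \<phi> (a, f)) \<noteq> 0"
      unfolding apply_bs_eq .
    then have "\<exists>f\<in>{f. \<phi> (a, f) \<noteq> 0}. bs_mat p q f g * \<phi> (a, f) \<noteq> 0"
    proof (rule contrapos_np)
      assume "\<not> (\<exists>f\<in>{f. \<phi> (a, f) \<noteq> 0}. bs_mat p q f g * \<phi> (a, f) \<noteq> 0)"
      then have "\<forall>f\<in>{f. \<phi> (a, f) \<noteq> 0}. bs_mat p q f g * \<phi> (a, f) = 0" by blast
      then show "(\<Sum>f\<in>{f. \<phi> (a, f) \<noteq> 0}. bs_mat p q f g * \<phi> (a, f)) = 0"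
        by (rule sum.neutral)
    qed
    then obtain f where "\<phi> (a, f) \<noteq> 0" "bs_mat p q f g * \<phi> (a, f) \<noteq> 0"
      by blast
    then show "g \<in> (\<Union>f\<in>{f. \<phi> (a, f) \<noteq> 0}. {g. bs_mat p q f g \<noteq> 0})" by auto
  qed
  moreover have "finite (\<Union>f\<in>{f. \<phi> (a, f) \<noteq> 0}. {g. bs_mat p q f g \<noteq> 0})"
    by (rule finite_UN_I) (use assms fin_bs_mat in auto)
  ultimately show ?thesis using finite_subset by blast
qed

lemma step_eq:
  fixes \<phi> \<chi> :: "('a, 'i::finite) state"
  assumes fin1: "finite {f. \<phi> (a, f) \<noteq> 0}" and fin2: "finite {f. \<chi> (a, f) \<noteq> 0}"
    and pres: "\<And>f g. bs_mat p q f g \<noteq> 0 \<Longrightarrow> H g \<Longrightarrow> H f"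
    and eq: "\<And>f. H f \<Longrightarrow> \<phi> (a, f) = \<chi> (a, f)"
    and Hg: "H g"
  shows "apply_bs p q \<phi> (a, g) = apply_bs p q \<chi> (a, g)"
proof -
  define U where "U = {f. \<phi> (a, f) \<noteq> 0} \<union> {f. \<chi> (a, f) \<noteq> 0}"
  have fU: "finite U" using fin1 fin2 U_def by simp
  have "apply_bs p q \<phi> (a, g) = (\<Sum>f\<in>U. bs_mat p q f g * \<phi> (a, f))"
    unfolding apply_bs_eq using fU by (intro sum.mono_neutral_left) (auto simp: U_def)
  also have "\<dots> = (\<Sum>f\<in>U. bs_mat p q f g * \<chi> (a, f))"
  proof (rule sum.cong)
    fix f assume "f \<in> U"
    show "bs_mat p q f g * \<phi> (a, f) = bs_mat p q f g * \<chi> (a, f)"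
      using pres[of f g] eq[of f] Hg by (cases "bs_mat p q f g = 0") auto
  qed simp
  also have "\<dots> = apply_bs p q \<chi> (a, g)"
    unfolding apply_bs_eq using fU by (intro sum.mono_neutral_right) (auto simp: U_def)
  finally show ?thesis .
qed

lemma fold_eq:
  fixes \<phi> \<chi> :: "('a, 'i::finite) state"
  assumes "\<forall>a. finite {f. \<phi> (a, f) \<noteq> 0}" "\<forall>a. finite {f. \<chi> (a, f) \<noteq> 0}"
    and "\<forall>(p, q)\<in>set ps. \<forall>f g. bs_mat p q f g \<noteq> 0 \<longrightarrow> H g \<longrightarrow> H f"
    and "\<forall>a f. H f \<longrightarrow> \<phi> (a, f) = \<chi> (a, f)"
  shows "\<forall>a g. H g \<longrightarrow> fold (\<lambda>(p, q) \<phi>. apply_bs p q \<phi>) ps \<phi> (a, g)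
                      = fold (\<lambda>(p, q) \<phi>. apply_bs p q \<phi>) ps \<chi> (a, g)"
  using assms
proof (induction ps arbitrary: \<phi> \<chi>)
  case Nil
  then show ?case by simp
next
  case (Cons pq ps)
  obtain p q where pq: "pq = (p, q)" by fastforce
  have "\<forall>a g. H g \<longrightarrow> fold (\<lambda>(p, q) \<phi>. apply_bs p q \<phi>) ps (apply_bs p q \<phi>) (a, g)
                      = fold (\<lambda>(p, q) \<phi>. apply_bs p q \<phi>) ps (apply_bs p q \<chi>) (a, g)"
  proof (rule Cons.IH)
    show "\<forall>a. finite {f. apply_bs p q \<phi> (a, f) \<noteq> 0}" using Cons.prems(1) by (auto intro: fin_apply_bs)
    show "\<forall>a. finite {f. apply_bs p q \<chi> (a, f) \<noteq> 0}" using Cons.prems(2) by (auto intro: fin_apply_bs)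
    show "\<forall>(p, q)\<in>set ps. \<forall>f g. bs_mat p q f g \<noteq> 0 \<longrightarrow> H g \<longrightarrow> H f" using Cons.prems(3) by auto
    show "\<forall>a f. H f \<longrightarrow> apply_bs p q \<phi> (a, f) = apply_bs p q \<chi> (a, f)"
    proof (intro allI impI)
      fix a f assume "H f"
      show "apply_bs p q \<phi> (a, f) = apply_bs p q \<chi> (a, f)"
        apply (rule step_eq[where H = H])
        using Cons.prems pq \<open>H f\<close> by auto
    qed
  qed
  then show ?case using pq by simp
qed

lemma mod_pair: "(i::nat) < n \<Longrightarrow> (2 * i + 2) mod (2 * n) = (if i + 1 = n then 0 else 2 * i + 2)"
  by auto

lemma pattern_pres:
  assumes "bs_mat p q f g \<noteq> 0"
  shows "\<forall>j. j \<noteq> p \<and> j \<noteq> q \<longrightarrow> pattern g j = pattern f j"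
    and "pattern g p + pattern g q = pattern f p + pattern f q"
proof -
  note h = bs_mat_nz[OF assms]
  show "\<forall>j. j \<noteq> p \<and> j \<noteq> q \<longrightarrow> pattern g j = pattern f j"
    using h(1) unfolding pattern_def by auto
  show "pattern g p + pattern g q = pattern f p + pattern f q"
    using h(2) unfolding pattern_def by (simp add: sum.distrib[symmetric])
qed

lemma herald_pres:
  assumes "(p, q) \<in> set (ghz_pairs n)" "bs_mat p q f g \<noteq> 0" "herald n (pattern g)"
  shows "herald n (pattern f)"
proof -
  obtain i where i: "i < n" "p = 2 * i + 1" "q = (2 * i + 2) mod (2 * n)"
    using assms(1) unfolding ghz_pairs_def by auto
  note pp = pattern_pres[OF assms(2)]
  show ?thesis unfolding herald_def
  proof (intro allI impI)
    fix i' assume i': "i' < n"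
    show "pattern f (2 * i' + 1) + pattern f ((2 * i' + 2) mod (2 * n)) = 1"
    proof (cases "i' = i")
      case True
      have "pattern g p + pattern g q = 1" using assms(3) i unfolding herald_def by simp
      then have "pattern f p + pattern f q = 1" using pp(2) by simp
      then show ?thesis using i(2,3) True by simp
    next
      case False
      have d1: "2 * i' + 1 \<noteq> p \<and> 2 * i' + 1 \<noteq> q"
        using i i' False mod_pair[of i n] by auto
      have m1: "(2 * i + 2) mod (2 * n) = (if i + 1 = n then 0 else 2 * i + 2)"
        using mod_pair[of i n] i(1) by blast
      have m2: "(2 * i' + 2) mod (2 * n) = (if i' + 1 = n then 0 else 2 * i' + 2)"
        using mod_pair[of i' n] i' by blast
      have d2: "(2 * i' + 2) mod (2 * n) \<noteq> p \<and> (2 * i' + 2) mod (2 * n) \<noteq> q"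
        unfolding m2 i(2,3) m1 using False by presburger
      have e1: "pattern g (2 * i' + 1) = pattern f (2 * i' + 1)"
        by (rule pp(1)[rule_format]) (use d1 in blast)
      have e2: "pattern g ((2 * i' + 2) mod (2 * n)) = pattern f ((2 * i' + 2) mod (2 * n))"
        by (rule pp(1)[rule_format]) (use d2 in blast)
      have "pattern g (2 * i' + 1) + pattern g ((2 * i' + 2) mod (2 * n)) = 1"
        using assms(3) i' unfolding herald_def by blast
      then show ?thesis unfolding e1 e2 .
    qed
  qed
qed

lemma main_eq:
  fixes \<psi> :: "('a, 'i::finite) state"
  assumes fin: "finite {x. \<psi> x \<noteq> 0}"
    and P: "\<And>a f. \<psi> (a, f) \<noteq> 0 \<Longrightarrow> herald n (pattern f) \<Longrightarrow> P (pattern f)"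
    and hm: "herald n m" and n: "n > 0"
  shows "proj_outcome n m (ghz_optics n \<psi>) = proj_outcome n m (ghz_optics n (restrict_terms P \<psi>))"
proof -
  let ?H = "\<lambda>g. herald n (pattern g)"
  have fa: "\<forall>a. finite {f. \<psi> (a, f) \<noteq> 0}"
  proof
    fix a
    have "finite (Pair a -` {x. \<psi> x \<noteq> 0})"
      by (rule finite_vimageI[OF fin]) (simp add: inj_on_def)
    then show "finite {f. \<psi> (a, f) \<noteq> 0}" by (simp add: vimage_def)
  qed
  have fb: "\<forall>a. finite {f. restrict_terms P \<psi> (a, f) \<noteq> 0}"
  proof
    fix a
    have "{f. restrict_terms P \<psi> (a, f) \<noteq> 0} \<subseteq> {f. \<psi> (a, f) \<noteq> 0}"
      unfolding restrict_terms_def by auto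
    then show "finite {f. restrict_terms P \<psi> (a, f) \<noteq> 0}" using fa finite_subset by blast
  qed
  have key: "\<forall>a g. ?H g \<longrightarrow> ghz_optics n \<psi> (a, g) = ghz_optics n (restrict_terms P \<psi>) (a, g)"
    unfolding ghz_optics_def
  proof (rule fold_eq[OF fa fb])
    show "\<forall>(p, q)\<in>set (ghz_pairs n). \<forall>f g. bs_mat p q f g \<noteq> 0 \<longrightarrow> ?H g \<longrightarrow> ?H f"
      using herald_pres by blast
    show "\<forall>a f. ?H f \<longrightarrow> \<psi> (a, f) = restrict_terms P \<psi> (a, f)"
      unfolding restrict_terms_def using P by auto
  qed
  show ?thesis
  proof (rule ext, clarify)
    fix a g
    show "proj_outcome n m (ghz_optics n \<psi>) (a, g) = proj_outcome n m (ghz_optics n (restrict_terms P \<psi>)) (a, g)"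
    proof (cases "\<forall>j<2 * n. pattern g j = m j")
      case True
      have "?H g" unfolding herald_def
      proof (intro allI impI)
        fix i assume "i < n"
        have "(2 * i + 2) mod (2 * n) < 2 * n" using n by simp
        moreover have "2 * i + 1 < 2 * n" using \<open>i < n\<close> by simp
        ultimately show "pattern g (2 * i + 1) + pattern g ((2 * i + 2) mod (2 * n)) = 1"
          using True hm \<open>i < n\<close> unfolding herald_def by simp
      qed
      then show ?thesis using key True unfolding proj_outcome_def by simp
    next
      case False
      then show ?thesis unfolding proj_outcome_def by auto
    qed
  qed
qed

theorem lemma2:
  fixes n :: nat and \<psi> :: "('a, 'i::finite) state"
  assumes "n \<ge> 2"
    and "finite {x. \<psi> x \<noteq> 0}"
    and "\<forall>a f j k. \<psi> (a, f) \<noteq> 0 \<longrightarrow> 2 * n \<le> j \<longrightarrow> f j k = 0"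
  shows "(\<forall>m. herald n m \<longrightarrow>
            proj_outcome n m (ghz_optics n \<psi>)
            = proj_outcome n m (ghz_optics n (restrict_terms (\<lambda>m. m \<in> S_set n \<psi>) \<psi>)))
       \<and> ((\<forall>m\<in>S_set n \<psi>. \<forall>i<n. (m (2 * i), m (2 * i + 1)) \<notin> {(1, 1), (0, 0)}) \<longrightarrow>
            S_set n \<psi> \<subseteq> {alt10 n, alt01 n}
          \<and> (\<forall>m. herald n m \<longrightarrow>
               proj_outcome n m (ghz_optics n \<psi>)
               = proj_outcome n m (ghz_optics n (restrict_terms (\<lambda>m. m \<in> {alt10 n, alt01 n}) \<psi>))))"
proof -
  have n0: "n > 0" using assms(1) by simp
  have inS: "pattern f \<in> S_set n \<psi>" if "\<psi> (a, f) \<noteq> 0" "herald n (pattern f)" for a f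
    using that unfolding S_set_def by blast
  have part1: "\<forall>m. herald n m \<longrightarrow>
            proj_outcome n m (ghz_optics n \<psi>)
            = proj_outcome n m (ghz_optics n (restrict_terms (\<lambda>m. m \<in> S_set n \<psi>) \<psi>))"
  proof (intro allI impI)
    fix m assume "herald n m"
    show "proj_outcome n m (ghz_optics n \<psi>)
            = proj_outcome n m (ghz_optics n (restrict_terms (\<lambda>m. m \<in> S_set n \<psi>) \<psi>))"
      by (rule main_eq[OF assms(2) _ \<open>herald n m\<close> n0]) (rule inS)
  qed
  have part2: "S_set n \<psi> \<subseteq> {alt10 n, alt01 n}
          \<and> (\<forall>m. herald n m \<longrightarrow>
               proj_outcome n m (ghz_optics n \<psi>)
               = proj_outcome n m (ghz_optics n (restrict_terms (\<lambda>m. m \<in> {alt10 n, alt01 n}) \<psi>)))"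
    if hx: "\<forall>m\<in>S_set n \<psi>. \<forall>i<n. (m (2 * i), m (2 * i + 1)) \<notin> {(1, 1), (0, 0)}"
  proof -
    have sub: "S_set n \<psi> \<subseteq> {alt10 n, alt01 n}"
    proof
      fix m assume mS: "m \<in> S_set n \<psi>"
      then obtain a f where af: "\<psi> (a, f) \<noteq> 0" "pattern f = m" and hm: "herald n m"
        unfolding S_set_def by blast
      have hx': "\<forall>i<n. (m (2 * i), m (2 * i + 1)) \<notin> {(1, 1), (0, 0)}" using hx mS by blast
      have z: "m j = 0" if "2 * n \<le> j" for j
        unfolding af(2)[symmetric] pattern_def using assms(3) af(1) that by simp
      have hi: "m (2 * i + 1) + m ((2 * i + 2) mod (2 * n)) = 1" if "i < n" for i
        using hm that unfolding herald_def by blast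
      have md: "(2 * i + 2) mod (2 * n) = 2 * i + 2" if "i + 1 < n" for i
        using mod_pair[of i n] that by simp
      have m0: "m 0 \<le> 1"
      proof -
        have "2 * (n - 1) + 2 = 2 * n" using n0 by simp
        then have "(2 * (n - 1) + 2) mod (2 * n) = 0" by simp
        moreover have "m (2 * (n - 1) + 1) + m ((2 * (n - 1) + 2) mod (2 * n)) = 1"
          by (rule hi) (use n0 in simp)
        ultimately have "m (2 * (n - 1) + 1) + m 0 = 1" by simp
        then show ?thesis by linarith
      qed
      have evle: "m (2 * i) \<le> 1" if "i < n" for i
      proof (cases i)
        case 0 then show ?thesis using m0 by simp
      next
        case (Suc i0)
        have e: "(2 * i0 + 2) mod (2 * n) = 2 * i0 + 2" by (rule md) (use Suc that in simp)
        have h: "m (2 * i0 + 1) + m ((2 * i0 + 2) mod (2 * n)) = 1" by (rule hi) (use Suc that in simp)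
        have "m (2 * i) = m ((2 * i0 + 2) mod (2 * n))" unfolding e Suc by simp
        then show ?thesis using h by linarith
      qed
      have od: "m (2 * i + 1) = 1 - m (2 * i)" if "i < n" for i
      proof -
        have "m (2 * i + 1) \<le> 1" using hi[OF that] by linarith
        moreover have "m (2 * i) \<le> 1" using evle[OF that] .
        moreover have "(m (2 * i), m (2 * i + 1)) \<notin> {(1, 1), (0, 0)}" using hx' that by blast
        ultimately show ?thesis by auto
      qed
      have stp: "m (2 * (i + 1)) = m (2 * i)" if "i + 1 < n" for i
      proof -
        have e: "(2 * i + 2) mod (2 * n) = 2 * i + 2" by (rule md) (use that in simp)
        have h: "m (2 * i + 1) + m ((2 * i + 2) mod (2 * n)) = 1" by (rule hi) (use that in simp)
        have e2: "m (2 * (i + 1)) = m ((2 * i + 2) mod (2 * n))" unfolding e by simp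
        have "m (2 * i + 1) = 1 - m (2 * i)" "m (2 * i) \<le> 1" using od[of i] evle[of i] that by simp_all
        then show ?thesis using h e2 by linarith
      qed
      have allev: "i < n \<longrightarrow> m (2 * i) = m 0" for i
      proof (induction i)
        case 0 then show ?case by simp
      next
        case (Suc i) then show ?case using stp[of i] by simp
      qed
      have m01: "m 0 = 0 \<or> m 0 = 1" using m0 by auto
      have form: "m j = (if j < 2 * n then (if even j then m 0 else 1 - m 0) else 0)" for j
      proof (cases "j < 2 * n")
        case True
        define i where "i = j div 2"
        have il: "i < n" using True i_def by simp
        show ?thesis
        proof (cases "even j")
          case True
          then have "j = 2 * i" using i_def by simp
          then show ?thesis using allev[of i] il \<open>j < 2 * n\<close> True by simp
        next
          case False
          then have "j = 2 * i + 1" using i_def by presburger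
          then show ?thesis using allev[of i] od[OF il] il \<open>j < 2 * n\<close> False by simp
        qed
      next
        case False then show ?thesis using z by simp
      qed
      show "m \<in> {alt10 n, alt01 n}"
      proof (cases "m 0 = 1")
        case True
        have "m j = alt10 n j" for j using form[of j] True unfolding alt10_def by simp
        then have "m = alt10 n" by (rule ext)
        then show ?thesis by simp
      next
        case False
        then have "m 0 = 0" using m01 by simp
        have "m j = alt01 n j" for j using form[of j] \<open>m 0 = 0\<close> unfolding alt01_def by simp
        then have "m = alt01 n" by (rule ext)
        then show ?thesis by simp
      qed
    qed
    have "\<forall>m. herald n m \<longrightarrow>
               proj_outcome n m (ghz_optics n \<psi>)
               = proj_outcome n m (ghz_optics n (restrict_terms (\<lambda>m. m \<in> {alt10 n, alt01 n}) \<psi>))"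
    proof (intro allI impI)
      fix m assume "herald n m"
      show "proj_outcome n m (ghz_optics n \<psi>)
               = proj_outcome n m (ghz_optics n (restrict_terms (\<lambda>m. m \<in> {alt10 n, alt01 n}) \<psi>))"
        by (rule main_eq[OF assms(2) _ \<open>herald n m\<close> n0]) (use inS sub in blast)
    qed
    with sub show ?thesis by blast
  qed
  show ?thesis using part1 part2 by blast
qed

end
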